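(* Let $a,b,\varepsilon,\beta$ be positive constants, $L>0$, $T>0$, $\Omega_T=\{(x,t):0\le x\le L,\ 0<t\le T\}$, let $f$ be continuous in $\Omega_T$ and $u_0$ continuous on $[0,L]$, and let $u$ be the solution of \[ \begin{cases} u_t-\varepsilon u_{xx}+a u+b\displaystyle\int_0^t e^{-\beta(t-\tau)}u(x,\tau)\,d\tau=f(x,t), & (x,t)\in\Omega_T,\\ u(x,0)=u_0(x), & x\in[0,L],\\ u_x(0,t)=0,\quad u_x(L,t)=0, & 0<t\le T, \end{cases} \] given by \[ u(x,t)=\int_0^L\big[\theta_0(|x-\xi|,t)+\theta_0(x+\xi,t)\big]u_0(\xi)\,d\xi+\int_0^t d\tau\int_0^L\big[\theta_0(|x-\xi|,t-\tau)+\theta_0(x+\xi,t-\tau)\big]f(\xi,\tau)\,d\xi . \] Then, for large $t$, $u$ verifies the estimate \[ |u(x,t)|\le 2\Big[\|f\|\,\beta_0+\|u_0\|\,(1+\sqrt b\,\pi\, t)\,e^{-\omega t}\Big], \] where $\omega=\min(a,\beta)$ and $\beta_0=\dfrac1a+\pi\sqrt b\,\dfrac{a+\beta}{2(a\beta)^{3/2}}$.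
   Context: $J_1$ is the Bessel function of the first kind of order $1$. $K_0(x,t)=\frac{1}{2\sqrt{\pi\varepsilon}}\Big[\frac{e^{-\frac{x^2}{4\varepsilon t}-at}}{\sqrt t}-\sqrt b\int_0^t\frac{e^{-\frac{x^2}{4\varepsilon y}-ay}}{\sqrt{t-y}}e^{-\beta(t-y)}J_1(2\sqrt{by(t-y)})\,dy\Big]$ and $\theta_0(x,t)=\sum_{n=-\infty}^{\infty}K_0(x+2nL,t)$. Norms: $\|u_0\|=\sup_{0\le x\le L}|u_0(x)|$, $\|f\|=\sup_{\Omega_T}|f(x,t)|$. *)

theory Defs
  imports "HOL-Analysis.Analysis"
begin

definition bessel_J1 :: "real \<Rightarrow> real" where
  "bessel_J1 z = (\<Sum>m. (-1) ^ m / (fact m * fact (m + 1)) * (z / 2) ^ (2 * m + 1))"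

definition K0 :: "real \<Rightarrow> real \<Rightarrow> real \<Rightarrow> real \<Rightarrow> real \<Rightarrow> real \<Rightarrow> real" where
  "K0 a b eps beta x t =
     1 / (2 * sqrt (pi * eps)) *
     (exp (- (x ^ 2) / (4 * eps * t) - a * t) / sqrt t
      - sqrt b * integral {0..t} (\<lambda>y.
           exp (- (x ^ 2) / (4 * eps * y) - a * y) / sqrt (t - y)
           * exp (- beta * (t - y)) * bessel_J1 (2 * sqrt (b * y * (t - y)))))"

definition theta0 :: "real \<Rightarrow> real \<Rightarrow> real \<Rightarrow> real \<Rightarrow> real \<Rightarrow> real \<Rightarrow> real \<Rightarrow> real" where
  "theta0 a b eps beta L x t = (\<Sum>\<^sub>\<infinity>n\<in>(UNIV :: int set). K0 a b eps beta (x + 2 * of_int n * L) t)"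

definition u_sol ::
  "real \<Rightarrow> real \<Rightarrow> real \<Rightarrow> real \<Rightarrow> real \<Rightarrow> (real \<Rightarrow> real \<Rightarrow> real) \<Rightarrow> (real \<Rightarrow> real)
   \<Rightarrow> real \<Rightarrow> real \<Rightarrow> real" where
  "u_sol a b eps beta L f u0 x t =
     integral {0..L} (\<lambda>\<xi>. (theta0 a b eps beta L \<bar>x - \<xi>\<bar> t + theta0 a b eps beta L (x + \<xi>) t) * u0 \<xi>)
   + integral {0..t} (\<lambda>\<tau>. integral {0..L} (\<lambda>\<xi>.
       (theta0 a b eps beta L \<bar>x - \<xi>\<bar> (t - \<tau>) + theta0 a b eps beta L (x + \<xi>) (t - \<tau>)) * f \<xi> \<tau>))"

definition norm0 :: "real \<Rightarrow> (real \<Rightarrow> real) \<Rightarrow> real" where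
  "norm0 L u0 = Sup ((\<lambda>x. \<bar>u0 x\<bar>) ` {0..L})"

definition normf :: "real \<Rightarrow> real \<Rightarrow> (real \<Rightarrow> real \<Rightarrow> real) \<Rightarrow> real" where
  "normf L T f = Sup ((\<lambda>(x, t). \<bar>f x t\<bar>) ` ({0..L} \<times> {0<..T}))"

end

theory Submission
  imports Defs "HOL-Probability.Distributions"
begin

definition cF :: "nat \<Rightarrow> real" where "cF m = (-1)^m / (fact m * fact (m+1))"
definition cG :: "nat \<Rightarrow> real" where "cG m = (-1)^m / (fact m)^2"

lemma cF_bound: "\<bar>cF n * y^n\<bar> \<le> inverse (fact n) * \<bar>y\<bar>^n"
proof -
  have "\<bar>cF n\<bar> = 1 / (fact n * fact (n+1))" by (simp add: cF_def abs_mult power_abs)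
  also have "\<dots> \<le> inverse (fact n)"
    using fact_ge_1[of "Suc n", where 'a=real] by (simp add: divide_simps)
  finally show ?thesis by (simp add: abs_mult power_abs mult_right_mono)
qed

lemma cG_bound: "\<bar>cG n * y^n\<bar> \<le> inverse (fact n) * \<bar>y\<bar>^n"
proof -
  have "\<bar>cG n\<bar> = 1 / (fact n)^2" by (simp add: cG_def abs_mult power_abs)
  also have "\<dots> \<le> inverse (fact n)"
    by (simp add: divide_simps power2_eq_square)
  finally show ?thesis by (simp add: abs_mult power_abs mult_right_mono)
qed

lemma summable_cF: "summable (\<lambda>n. cF n * y^n)"
  by (rule summable_comparison_test'[OF summable_exp[of "\<bar>y\<bar>"], of 0]) (use cF_bound in auto)

lemma summable_cG: "summable (\<lambda>n. cG n * y^n)"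
  by (rule summable_comparison_test'[OF summable_exp[of "\<bar>y\<bar>"], of 0]) (use cG_bound in auto)

definition FF :: "real \<Rightarrow> real" where "FF x = (\<Sum>n. cF n * x^n)"
definition GG :: "real \<Rightarrow> real" where "GG x = (\<Sum>n. cG n * x^n)"

lemma diffs_cG: "diffs cG = (\<lambda>n. - cF n)"
proof
  fix n
  show "diffs cG n = - cF n"
    unfolding diffs_def cG_def cF_def
    by (simp add: divide_simps power2_eq_square fact_Suc)
qed

lemma GG_deriv: "(GG has_real_derivative - FF x) (at x)"
proof -
  have "(GG has_real_derivative (\<Sum>n. diffs cG n * x^n)) (at x)"
    unfolding GG_def by (rule termdiffs_strong_converges_everywhere) (rule summable_cG)
  also have "(\<Sum>n. diffs cG n * x^n) = - FF x"
    unfolding diffs_cG FF_def using summable_cF by (simp add: suminf_minus)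
  finally show ?thesis .
qed

lemma FF_deriv: "(FF has_real_derivative (\<Sum>n. diffs cF n * x^n)) (at x)"
  unfolding FF_def by (rule termdiffs_strong_converges_everywhere) (rule summable_cF)

lemma FF_rel: "FF x + x * (\<Sum>n. diffs cF n * x^n) = GG x"
proof -
  have sd: "summable (\<lambda>n. diffs cF n * x^n)"
    by (rule termdiff_converges_all) (rule summable_cF)
  have "x * (\<Sum>n. diffs cF n * x^n) = (\<Sum>n. x * (diffs cF n * x^n))"
    using sd by (simp add: suminf_mult)
  also have "\<dots> = (\<Sum>n. of_nat (Suc n) * cF (Suc n) * x^(Suc n))"
    by (simp add: diffs_def algebra_simps)
  also have "\<dots> = (\<Sum>n. of_nat n * cF n * x^n)"
  proof -
    have s: "summable (\<lambda>n. of_nat (Suc n) * cF (Suc n) * x^(Suc n))"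
      using summable_mult[OF sd, of x] by (simp add: diffs_def algebra_simps)
    hence "summable (\<lambda>n. of_nat n * cF n * x^n)"
      by (subst summable_Suc_iff[symmetric])
    thus ?thesis by (subst suminf_split_head) auto
  qed
  finally have "FF x + x * (\<Sum>n. diffs cF n * x^n) = (\<Sum>n. cF n * x^n) + (\<Sum>n. of_nat n * cF n * x^n)"
    by (simp add: FF_def)
  also have "\<dots> = (\<Sum>n. cF n * x^n + of_nat n * cF n * x^n)"
  proof (rule suminf_add)
    show "summable (\<lambda>n. cF n * x ^ n)" by (rule summable_cF)
    have s: "summable (\<lambda>n. of_nat (Suc n) * cF (Suc n) * x^(Suc n))"
      using summable_mult[OF sd, of x] by (simp add: diffs_def algebra_simps)
    thus "summable (\<lambda>n. of_nat n * cF n * x^n)"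
      by (subst summable_Suc_iff[symmetric])
  qed
  also have "\<dots> = GG x"
    unfolding GG_def
  proof (rule suminf_cong)
    fix n
    have "cF n + of_nat n * cF n = cG n"
      unfolding cF_def cG_def by (simp add: divide_simps power2_eq_square fact_Suc) (simp add: algebra_simps)
    thus "cF n * x ^ n + of_nat n * cF n * x ^ n = cG n * x ^ n" by (metis distrib_right mult.assoc)
  qed
  finally show ?thesis by simp
qed

lemma GG0: "GG 0 = 1"
  unfolding GG_def using powser_zero[of cG] by (simp add: cG_def)

lemma energy: assumes "x \<ge> 0" shows "GG x ^ 2 + x * FF x ^ 2 \<le> 1"
proof -
  let ?E = "\<lambda>x. GG x ^ 2 + x * FF x ^ 2"
  have "?E x \<le> ?E 0"
  proof (rule DERIV_nonpos_imp_nonincreasing[OF assms])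
    fix y assume "0 \<le> y" "y \<le> x"
    let ?D = "\<Sum>n. diffs cF n * y^n"
    note d = DERIV_add[OF DERIV_power[OF GG_deriv[of y], where n=2] DERIV_mult[OF DERIV_ident DERIV_power[OF FF_deriv[of y], where n=2]]]
    have "(?E has_real_derivative (- (FF y ^ 2))) (at y)"
    proof (rule DERIV_cong[OF d])
      have e: "GG y = FF y + y * ?D" using FF_rel[of y] by simp
      show "of_nat 2 * (- FF y * GG y ^ (2 - Suc 0)) + (1 * FF y ^ 2 + of_nat 2 * (?D * FF y ^ (2 - Suc 0)) * y) = - (FF y ^ 2)"
        unfolding e by (simp add: algebra_simps power2_eq_square)
    qed
    thus "\<exists>d. (?E has_real_derivative d) (at y) \<and> d \<le> 0" by auto
  qed
  thus ?thesis using GG0 by simp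
qed

lemma four: "(2::real)^(m*2) = 4^m" by (simp add: power_mult power2_eq_square power_mult_distrib[symmetric])

lemma bessel_J1_eq: "bessel_J1 z = (z/2) * FF ((z/2)^2)"
proof -
  have "bessel_J1 z = (\<Sum>m. (z/2) * (cF m * ((z/2)^2)^m))"
    unfolding bessel_J1_def cF_def
    by (rule arg_cong[where f=suminf]) (auto simp: power_mult[symmetric] field_simps four)
  also have "\<dots> = (z/2) * FF ((z/2)^2)"
    unfolding FF_def by (rule suminf_mult[OF summable_cF])
  finally show ?thesis .
qed

lemma bessel_J1_bound: "\<bar>bessel_J1 z\<bar> \<le> 1"
proof -
  have "(bessel_J1 z)^2 = (z/2)^2 * FF ((z/2)^2) ^ 2" unfolding bessel_J1_eq by (simp add: power2_eq_square)
  also have "\<dots> \<le> 1" using energy[of "(z/2)^2"] by (smt (verit) zero_le_power2)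
  finally have "(bessel_J1 z)^2 \<le> 1" .
  thus ?thesis using abs_square_le_1 by blast
qed

lemma HK_bound:
  fixes g :: "real \<Rightarrow> real" and H :: "real \<Rightarrow> ennreal"
  assumes S: "S \<in> sets borel" and H: "H \<in> borel_measurable borel"
    and AE: "AE x in lborel. x \<in> S \<longrightarrow> ennreal \<bar>g x\<bar> \<le> H x"
  shows "ennreal \<bar>integral S g\<bar> \<le> (\<integral>\<^sup>+ x. H x * indicator S x \<partial>lborel)"
proof (cases "g integrable_on S")
  case False
  thus ?thesis by (simp add: not_integrable_integral)
next
  case True
  let ?f = "\<lambda>x. indicator S x * g x"
  have meas: "?f \<in> borel_measurable lebesgue"
    using has_integral_implies_lebesgue_measurable[OF integrable_integral[OF True]] by simp
  have "(\<integral>\<^sup>+ x. ennreal (norm (?f x)) \<partial>lebesgue) \<le> (\<integral>\<^sup>+ x. H x * indicator S x \<partial>lebesgue)"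
  proof (rule nn_integral_mono_AE)
    show "AE x in lebesgue. ennreal (norm (?f x)) \<le> H x * indicator S x"
      using AE_completion[OF AE] by eventually_elim (auto simp: indicator_def)
  qed
  also have "\<dots> = (\<integral>\<^sup>+ x. H x * indicator S x \<partial>lborel)"
    by (simp add: nn_integral_completion)
  finally have le: "(\<integral>\<^sup>+ x. ennreal (norm (?f x)) \<partial>lebesgue) \<le> (\<integral>\<^sup>+ x. H x * indicator S x \<partial>lborel)" .
  show ?thesis
  proof (cases "(\<integral>\<^sup>+ x. H x * indicator S x \<partial>lborel) = \<infinity>")
    case True thus ?thesis by simp
  next
    case False
    have int: "integrable lebesgue ?f"
      using le False by (intro integrableI_bounded meas) (simp add: top.not_eq_extremum le_less_trans)
    have "integral S g = integral UNIV ?f"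
      by (subst integral_restrict_UNIV[symmetric]) (rule arg_cong[where f="integral UNIV"], auto simp: indicator_def)
    also have "\<dots> = (\<integral>x. ?f x \<partial>lebesgue)" by (rule integral_lebesgue[OF int])
    finally have eq: "integral S g = (\<integral>x. ?f x \<partial>lebesgue)" .
    have "\<bar>integral S g\<bar> \<le> (\<integral>x. norm (?f x) \<partial>lebesgue)"
      unfolding eq using integral_norm_bound[of lebesgue ?f] by simp
    hence "ennreal \<bar>integral S g\<bar> \<le> ennreal (\<integral>x. norm (?f x) \<partial>lebesgue)" by (rule ennreal_leI)
    also have "\<dots> = (\<integral>\<^sup>+ x. ennreal (norm (?f x)) \<partial>lebesgue)"
      by (rule nn_integral_eq_integral[symmetric]) (auto intro: integrable_norm int)
    also note le
    finally show ?thesis .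
  qed
qed

lemma infsum_le_nn_count:
  fixes f :: "'i \<Rightarrow> real"
  shows "ennreal \<bar>infsum f UNIV\<bar> \<le> (\<integral>\<^sup>+ n. ennreal \<bar>f n\<bar> \<partial>count_space UNIV)"
proof (cases "f summable_on UNIV")
  case False thus ?thesis by (simp add: infsum_not_exists)
next
  case True
  hence abs: "(\<lambda>n. \<bar>f n\<bar>) summable_on UNIV"
    using summable_on_iff_abs_summable_on_real by auto
  have "\<bar>infsum f UNIV\<bar> \<le> infsum (\<lambda>n. \<bar>f n\<bar>) UNIV"
    using norm_infsum_bound[of f UNIV] abs by simp
  hence "ennreal \<bar>infsum f UNIV\<bar> \<le> ennreal (infsum (\<lambda>n. \<bar>f n\<bar>) UNIV)" by (rule ennreal_leI)
  also have "\<dots> = (SUP F\<in>{F. finite F \<and> F \<subseteq> UNIV}. ennreal (sum (\<lambda>n. \<bar>f n\<bar>) F))"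
    by (rule infsum_nonneg_is_SUPREMUM_ennreal[OF abs]) simp
  also have "\<dots> \<le> (\<integral>\<^sup>+ n. ennreal \<bar>f n\<bar> \<partial>count_space UNIV)"
  proof (rule SUP_least)
    fix F :: "'i set" assume F: "F \<in> {F. finite F \<and> F \<subseteq> UNIV}"
    have "ennreal (sum (\<lambda>n. \<bar>f n\<bar>) F) = (\<Sum>n\<in>F. ennreal \<bar>f n\<bar>)"
      by (rule sum_ennreal[symmetric]) simp
    also have "\<dots> = (\<integral>\<^sup>+ n. ennreal \<bar>f n\<bar> \<partial>count_space F)"
      using F by (simp add: nn_integral_count_space_finite)
    also have "\<dots> = (\<integral>\<^sup>+ n. ennreal \<bar>f n\<bar> * indicator F n \<partial>count_space UNIV)"
      by (rule nn_integral_count_space_indicator) simp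
    also have "\<dots> \<le> (\<integral>\<^sup>+ n. ennreal \<bar>f n\<bar> \<partial>count_space UNIV)"
      by (intro nn_integral_mono) (auto simp: indicator_def)
    finally show "ennreal (sum (\<lambda>n. \<bar>f n\<bar>) F) \<le> (\<integral>\<^sup>+ n. ennreal \<bar>f n\<bar> \<partial>count_space UNIV)" .
  qed
  finally show ?thesis .
qed

lemma gauss_nn:
  fixes k :: real assumes k: "k > 0"
  shows "(\<integral>\<^sup>+ y. ennreal (exp (- (y ^ 2) / k)) \<partial>lborel) = ennreal (sqrt (pi * k))"
proof -
  define \<sigma> where "\<sigma> = sqrt (k / 2)"
  have \<sigma>: "\<sigma> > 0" "\<sigma>\<^sup>2 = k / 2" using k by (auto simp: \<sigma>_def)
  have s2: "sqrt 2 * \<sigma> = sqrt k" unfolding \<sigma>_def by (simp add: real_sqrt_mult[symmetric])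
  have s3: "2 * \<sigma>\<^sup>2 = k" using \<sigma> by simp
  have eq: "exp (- (y ^ 2) / k) = sqrt (pi * k) * normal_density 0 \<sigma> y" for y
    unfolding normal_density_def s3 using \<sigma> k s2 by (simp add: real_sqrt_mult)
  have "(\<integral>\<^sup>+ y. ennreal (exp (- (y ^ 2) / k)) \<partial>lborel) = (\<integral>\<^sup>+ y. ennreal (sqrt (pi * k)) * ennreal (normal_density 0 \<sigma> y) \<partial>lborel)"
    by (intro nn_integral_cong, simp only: eq, rule ennreal_mult) (use k in \<open>auto simp: normal_density_nonneg\<close>)
  also have "\<dots> = ennreal (sqrt (pi * k)) * (\<integral>\<^sup>+ y. ennreal (normal_density 0 \<sigma> y) \<partial>lborel)"
    by (rule nn_integral_cmult) simp
  also have "(\<integral>\<^sup>+ y. ennreal (normal_density 0 \<sigma> y) \<partial>lborel) = 1"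
    using \<sigma> by (subst nn_integral_eq_integral) (use k in \<open>auto simp: normal_density_nonneg\<close>)
  finally show ?thesis by simp
qed

definition Th :: "real \<Rightarrow> (real \<Rightarrow> ennreal) \<Rightarrow> real \<Rightarrow> ennreal" where
  "Th L R z = (\<integral>\<^sup>+ n. R (z + 2 * of_int n * L) \<partial>count_space (UNIV :: int set))"

lemma Th_abs:
  assumes even: "\<And>y. R (- y) = R y"
  shows "Th L R \<bar>z\<bar> = Th L R z"
proof (cases "z \<ge> 0")
  case True thus ?thesis by simp
next
  case False
  have "Th L R \<bar>z\<bar> = (\<integral>\<^sup>+ n. R (z + 2 * of_int (- n) * L) \<partial>count_space (UNIV :: int set))"
    unfolding Th_def using False
    by (intro nn_integral_cong) (metis abs_of_neg even minus_diff_eq mult_minus_left mult_minus_right not_le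
        of_int_minus uminus_add_conv_diff add.commute)
  also have "\<dots> = Th L R z"
    unfolding Th_def by (rule nn_integral_bij_count_space[of uminus UNIV UNIV "\<lambda>m. R (z + 2 * of_int m * L)"])
      (auto intro!: bij_betwI[of _ _ _ uminus])
  finally show ?thesis .
qed

lemma Th_meas[measurable]:
  assumes [measurable]: "R \<in> borel_measurable borel"
  shows "Th L R \<in> borel_measurable borel"
proof -
  have "(\<lambda>(z, n). R (z + 2 * of_int n * L)) \<in> borel_measurable (borel \<Otimes>\<^sub>M count_space (UNIV :: int set))"
  proof -
    have "(\<lambda>(z, n::int). z + 2 * of_int n * L) \<in> borel_measurable (borel \<Otimes>\<^sub>M count_space UNIV)"
    proof -
      have "(\<lambda>p :: real \<times> int. of_int (snd p) :: real) \<in> borel_measurable (borel \<Otimes>\<^sub>M count_space UNIV)"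
        by (rule measurable_compose[OF measurable_snd]) simp
      thus ?thesis by (simp add: case_prod_beta')
    qed
    thus ?thesis by (simp add: case_prod_beta')
  qed
  hence "(\<lambda>z. \<integral>\<^sup>+ n. R (z + 2 * of_int n * L) \<partial>count_space (UNIV :: int set)) \<in> borel_measurable borel"
    by (intro sigma_finite_measure.borel_measurable_nn_integral sigma_finite_measure_count_space_countable) auto
  thus ?thesis unfolding Th_def[abs_def] .
qed

lemma affine_piece:
  fixes R :: "real \<Rightarrow> ennreal" and t L :: real
  assumes [measurable]: "R \<in> borel_measurable borel"
  shows "(\<integral>\<^sup>+ \<xi>. R (t - \<xi>) * indicator {0..L} \<xi> \<partial>lborel) = (\<integral>\<^sup>+ y. R y * indicator {t - L..t} y \<partial>lborel)"
    and "(\<integral>\<^sup>+ \<xi>. R (t + \<xi>) * indicator {0..L} \<xi> \<partial>lborel) = (\<integral>\<^sup>+ y. R y * indicator {t..t + L} y \<partial>lborel)"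
proof -
  have "(\<integral>\<^sup>+ y. R y * indicator {t - L..t} y \<partial>lborel) = ennreal \<bar>-1\<bar> * (\<integral>\<^sup>+ \<xi>. R (t + (-1) * \<xi>) * indicator {t - L..t} (t + (-1) * \<xi>) \<partial>lborel)"
    by (rule nn_integral_real_affine) auto
  also have "\<dots> = (\<integral>\<^sup>+ \<xi>. R (t - \<xi>) * indicator {0..L} \<xi> \<partial>lborel)"
    by (auto intro!: nn_integral_cong simp: indicator_def)
  finally show "(\<integral>\<^sup>+ \<xi>. R (t - \<xi>) * indicator {0..L} \<xi> \<partial>lborel) = (\<integral>\<^sup>+ y. R y * indicator {t - L..t} y \<partial>lborel)" ..
  have "(\<integral>\<^sup>+ y. R y * indicator {t..t + L} y \<partial>lborel) = ennreal \<bar>1\<bar> * (\<integral>\<^sup>+ \<xi>. R (t + 1 * \<xi>) * indicator {t..t + L} (t + 1 * \<xi>) \<partial>lborel)"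
    by (rule nn_integral_real_affine) auto
  also have "\<dots> = (\<integral>\<^sup>+ \<xi>. R (t + \<xi>) * indicator {0..L} \<xi> \<partial>lborel)"
    by (auto intro!: nn_integral_cong simp: indicator_def)
  finally show "(\<integral>\<^sup>+ \<xi>. R (t + \<xi>) * indicator {0..L} \<xi> \<partial>lborel) = (\<integral>\<^sup>+ y. R y * indicator {t..t + L} y \<partial>lborel)" ..
qed

lemma tile:
  assumes L: "L > 0" and [measurable]: "R \<in> borel_measurable borel" and even: "\<And>y. R (- y) = R y"
  shows "(\<integral>\<^sup>+ \<xi>. (Th L R \<bar>x - \<xi>\<bar> + Th L R (x + \<xi>)) * indicator {0..L} \<xi> \<partial>lborel) \<le> (\<integral>\<^sup>+ y. R y \<partial>lborel)"
proof -
  define J where "J n = {x - L + 2 * of_int n * L ..< x + L + 2 * of_int n * L}" for n :: int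
  have "(\<integral>\<^sup>+ \<xi>. (Th L R \<bar>x - \<xi>\<bar> + Th L R (x + \<xi>)) * indicator {0..L} \<xi> \<partial>lborel)
     = (\<integral>\<^sup>+ \<xi>. (\<integral>\<^sup>+ n. (R (x - \<xi> + 2 * of_int n * L) + R (x + \<xi> + 2 * of_int n * L)) * indicator {0..L} \<xi> \<partial>count_space UNIV) \<partial>lborel)"
  proof (intro nn_integral_cong)
    fix \<xi>
    have "(Th L R \<bar>x - \<xi>\<bar> + Th L R (x + \<xi>)) = (\<integral>\<^sup>+ n. (R (x - \<xi> + 2 * of_int n * L) + R (x + \<xi> + 2 * of_int n * L)) \<partial>count_space UNIV)"
      unfolding Th_abs[where R=R and L=L, OF even] unfolding Th_def by (rule nn_integral_add[symmetric]) auto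
    thus "(Th L R \<bar>x - \<xi>\<bar> + Th L R (x + \<xi>)) * indicator {0..L} \<xi> =
        (\<integral>\<^sup>+ n. (R (x - \<xi> + 2 * of_int n * L) + R (x + \<xi> + 2 * of_int n * L)) * indicator {0..L} \<xi> \<partial>count_space UNIV)"
      by (simp add: nn_integral_multc)
  qed
  also have "\<dots> = (\<integral>\<^sup>+ n. (\<integral>\<^sup>+ \<xi>. (R (x - \<xi> + 2 * of_int n * L) + R (x + \<xi> + 2 * of_int n * L)) * indicator {0..L} \<xi> \<partial>lborel) \<partial>count_space UNIV)"
    by (rule nn_integral_count_space_nn_integral) auto
  also have "\<dots> = (\<integral>\<^sup>+ n. (\<integral>\<^sup>+ y. R y * indicator (J n) y \<partial>lborel) \<partial>count_space UNIV)"
  proof (rule nn_integral_cong)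
    fix n :: int
    let ?t = "x + 2 * of_int n * L"
    have "(\<integral>\<^sup>+ \<xi>. (R (x - \<xi> + 2 * of_int n * L) + R (x + \<xi> + 2 * of_int n * L)) * indicator {0..L} \<xi> \<partial>lborel)
       = (\<integral>\<^sup>+ \<xi>. R (?t - \<xi>) * indicator {0..L} \<xi> \<partial>lborel) + (\<integral>\<^sup>+ \<xi>. R (?t + \<xi>) * indicator {0..L} \<xi> \<partial>lborel)"
      by (subst nn_integral_add[symmetric]) (auto intro!: nn_integral_cong simp: algebra_simps)
    also have "\<dots> = (\<integral>\<^sup>+ y. R y * indicator {?t - L..?t} y \<partial>lborel) + (\<integral>\<^sup>+ y. R y * indicator {?t..?t + L} y \<partial>lborel)"
      by (simp only: affine_piece[OF assms(2)])
    also have "\<dots> = (\<integral>\<^sup>+ y. R y * indicator {?t - L..?t} y + R y * indicator {?t..?t + L} y \<partial>lborel)"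
      by (rule nn_integral_add[symmetric]) auto
    also have "\<dots> = (\<integral>\<^sup>+ y. R y * indicator (J n) y \<partial>lborel)"
    proof (rule nn_integral_cong_AE)
      have "AE y in lborel. y \<noteq> ?t" by (rule AE_lborel_singleton)
      moreover have "AE y in lborel. y \<noteq> ?t + L" by (rule AE_lborel_singleton)
      ultimately show "AE y in lborel. R y * indicator {?t - L..?t} y + R y * indicator {?t..?t + L} y = R y * indicator (J n) y"
        by eventually_elim (auto simp: J_def indicator_def algebra_simps)
    qed
    finally show "(\<integral>\<^sup>+ \<xi>. (R (x - \<xi> + 2 * of_int n * L) + R (x + \<xi> + 2 * of_int n * L)) * indicator {0..L} \<xi> \<partial>lborel)
       = (\<integral>\<^sup>+ y. R y * indicator (J n) y \<partial>lborel)" .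
  qed
  also have "\<dots> = (\<integral>\<^sup>+ y. (\<integral>\<^sup>+ n. R y * indicator (J n) y \<partial>count_space UNIV) \<partial>lborel)"
    by (rule nn_integral_count_space_nn_integral[symmetric]) (auto simp: J_def)
  also have "\<dots> = (\<integral>\<^sup>+ y. R y \<partial>lborel)"
  proof (intro nn_integral_cong)
    fix y
    define n0 where "n0 = floor ((y - x + L) / (2 * L))"
    have "indicator (J n) y = (indicator {n0} n :: ennreal)" for n
    proof -
      have "y \<in> J n \<longleftrightarrow> of_int n \<le> (y - x + L) / (2 * L) \<and> (y - x + L) / (2 * L) < of_int n + 1"
        unfolding J_def using L by (auto simp: field_simps)
      also have "\<dots> \<longleftrightarrow> n = n0" unfolding n0_def by (metis floor_eq_iff)
      finally show ?thesis by (auto simp: indicator_def)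
    qed
    hence "(\<integral>\<^sup>+ n. R y * indicator (J n) y \<partial>count_space UNIV) = (\<integral>\<^sup>+ n. R y * indicator {n0} n \<partial>count_space UNIV)"
      by simp
    also have "\<dots> = R y" by (simp add: nn_integral_cmult_indicator)
    finally show "(\<integral>\<^sup>+ n. R y * indicator (J n) y \<partial>count_space UNIV) = R y" .
  qed
  finally show ?thesis by simp
qed

lemma gamma_scaled:
  fixes k p :: real assumes k: "k > 0" and p: "p > 0"
  shows "(\<integral>\<^sup>+ x. ennreal (indicator {0..} x * x powr (p - 1) * exp (- k * x)) \<partial>lborel) = ennreal (Gamma p / k powr p)"
proof -
  let ?f = "\<lambda>t. ennreal (indicator {0..} t * t powr (p - 1) / exp t)"
  have "ennreal (Gamma p) = (\<integral>\<^sup>+ t. ?f t \<partial>lborel)"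
    using Gamma_conv_nn_integral_real[OF p] by simp
  also have "\<dots> = ennreal \<bar>k\<bar> * (\<integral>\<^sup>+ x. ?f (0 + k * x) \<partial>lborel)"
    by (rule nn_integral_real_affine) (use k in auto)
  also have "(\<integral>\<^sup>+ x. ?f (0 + k * x) \<partial>lborel) = (\<integral>\<^sup>+ x. ennreal (k powr (p - 1)) * ennreal (indicator {0..} x * x powr (p - 1) * exp (- k * x)) \<partial>lborel)"
  proof (rule nn_integral_cong)
    fix x :: real
    show "?f (0 + k * x) = ennreal (k powr (p - 1)) * ennreal (indicator {0..} x * x powr (p - 1) * exp (- k * x))"
    proof (cases "x \<ge> 0")
      case True
      have "?f (0 + k * x) = ennreal (k powr (p - 1) * (indicator {0..} x * x powr (p - 1) * exp (- k * x)))"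
        using True k by (simp add: powr_mult exp_minus field_simps indicator_def zero_le_mult_iff)
      thus ?thesis by (simp add: ennreal_mult True)
    next
      case False
      thus ?thesis using k by (simp add: indicator_def zero_le_mult_iff)
    qed
  qed
  also have "\<dots> = ennreal (k powr (p - 1)) * (\<integral>\<^sup>+ x. ennreal (indicator {0..} x * x powr (p - 1) * exp (- k * x)) \<partial>lborel)"
    by (rule nn_integral_cmult) measurable
  finally have "ennreal (Gamma p) = ennreal k * ennreal (k powr (p - 1)) * (\<integral>\<^sup>+ x. ennreal (indicator {0..} x * x powr (p - 1) * exp (- k * x)) \<partial>lborel)"
    using k by (simp add: mult.assoc)
  also have "ennreal k * ennreal (k powr (p - 1)) = ennreal (k powr p)"
    using k by (simp add: ennreal_mult[symmetric] powr_diff field_simps)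
  finally have eq: "ennreal (Gamma p) = ennreal (k powr p) * (\<integral>\<^sup>+ x. ennreal (indicator {0..} x * x powr (p - 1) * exp (- k * x)) \<partial>lborel)" .
  have kp: "k powr p > 0" using k by simp
  have "ennreal (Gamma p / k powr p) = ennreal (Gamma p) * ennreal (1 / k powr p)"
    using kp p by (simp add: ennreal_mult[symmetric] less_imp_le)
  also have "\<dots> = (\<integral>\<^sup>+ x. ennreal (indicator {0..} x * x powr (p - 1) * exp (- k * x)) \<partial>lborel) * (ennreal (k powr p) * ennreal (1 / k powr p))"
    unfolding eq by (simp add: mult_ac)
  also have "ennreal (k powr p) * ennreal (1 / k powr p) = 1"
    using kp by (simp add: ennreal_mult[symmetric])
  finally show ?thesis by simp
qed

lemma Gamma_three_halves: "Gamma (3/2 :: real) = sqrt pi / 2"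
proof -
  have "Gamma (1/2 + 1 :: real) = 1/2 * Gamma (1/2)"
  proof (rule Gamma_plus1)
    show "(1/2::real) \<notin> \<int>\<^sub>\<le>\<^sub>0"
    proof
      assume "(1/2::real) \<in> \<int>\<^sub>\<le>\<^sub>0"
      then obtain n :: int where "real_of_int n * 2 = 1" by (auto simp: nonpos_Ints_def)
      hence "real_of_int (n * 2) = real_of_int 1" by simp
      hence "n * 2 = 1" by (simp only: of_int_eq_iff)
      thus False by presburger
    qed
  qed
  thus ?thesis by (simp add: Gamma_one_half_real)
qed

locale setting =
  fixes a b eps beta L :: real
  assumes a: "a > 0" and b: "b > 0" and eps: "eps > 0" and beta: "beta > 0" and L: "L > 0"
begin

definition c0 :: real where "c0 = 1 / (2 * sqrt (pi * eps))"

lemma c0_pos: "c0 > 0" unfolding c0_def using eps by simp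

definition hK :: "real \<Rightarrow> real \<Rightarrow> real \<Rightarrow> real" where
  "hK s y w = exp (- (y ^ 2) / (4 * eps * w) - a * w) / sqrt (s - w) * exp (- beta * (s - w))"

definition R :: "real \<Rightarrow> real \<Rightarrow> ennreal" where
  "R s y = ennreal (c0 * (exp (- (y ^ 2) / (4 * eps * s) - a * s) / sqrt s))
     + ennreal (c0 * sqrt b) * (\<integral>\<^sup>+ w. ennreal (hK s y w) * indicator {0..s} w \<partial>lborel)"

lemma hK_meas[measurable]: "(\<lambda>w. hK s y w) \<in> borel_measurable borel"
  unfolding hK_def by measurable

lemma K0_bound:
  assumes s: "s > 0"
  shows "ennreal \<bar>K0 a b eps beta y s\<bar> \<le> R s y"
proof -
  let ?P = "exp (- (y ^ 2) / (4 * eps * s) - a * s) / sqrt s"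
  let ?g = "\<lambda>w. exp (- (y ^ 2) / (4 * eps * w) - a * w) / sqrt (s - w)
           * exp (- beta * (s - w)) * bessel_J1 (2 * sqrt (b * w * (s - w)))"
  let ?I = "integral {0..s} ?g"
  have P: "?P \<ge> 0" using s by simp
  have I: "ennreal \<bar>?I\<bar> \<le> (\<integral>\<^sup>+ w. ennreal (hK s y w) * indicator {0..s} w \<partial>lborel)"
  proof (rule HK_bound)
    show "AE x in lborel. x \<in> {0..s} \<longrightarrow> ennreal \<bar>?g x\<bar> \<le> ennreal (hK s y x)"
    proof (intro AE_I2 impI ennreal_leI)
      fix w assume w: "w \<in> {0..s}"
      have nn: "0 \<le> hK s y w" unfolding hK_def using w by simp
      have "\<bar>?g w\<bar> = hK s y w * \<bar>bessel_J1 (2 * sqrt (b * w * (s - w)))\<bar>"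
        unfolding hK_def using w by (simp add: abs_mult)
      also have "\<dots> \<le> hK s y w * 1" by (rule mult_left_mono[OF bessel_J1_bound nn])
      finally show "\<bar>?g w\<bar> \<le> hK s y w" by simp
    qed
  qed auto
  have eq: "K0 a b eps beta y s = c0 * (?P - sqrt b * ?I)"
    unfolding K0_def c0_def by simp
  have tri: "\<bar>?P - sqrt b * ?I\<bar> \<le> ?P + sqrt b * \<bar>?I\<bar>"
    using abs_triangle_ineq4[of ?P "sqrt b * ?I"] P s b by (simp add: abs_mult)
  have "\<bar>K0 a b eps beta y s\<bar> = c0 * \<bar>?P - sqrt b * ?I\<bar>"
    by (simp only: eq abs_mult abs_of_pos[OF c0_pos])
  also have "\<dots> \<le> c0 * (?P + sqrt b * \<bar>?I\<bar>)"
    by (rule mult_left_mono[OF tri]) (use c0_pos in simp)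
  also have "\<dots> = c0 * ?P + (c0 * sqrt b) * \<bar>?I\<bar>"
    by (simp only: distrib_left mult.assoc)
  finally have "\<bar>K0 a b eps beta y s\<bar> \<le> c0 * ?P + (c0 * sqrt b) * \<bar>?I\<bar>" .
  hence "ennreal \<bar>K0 a b eps beta y s\<bar> \<le> ennreal (c0 * ?P + (c0 * sqrt b) * \<bar>?I\<bar>)" by (rule ennreal_leI)
  also have "\<dots> = ennreal (c0 * ?P) + ennreal ((c0 * sqrt b) * \<bar>?I\<bar>)"
    by (rule ennreal_plus) (use c0_pos P b in \<open>auto intro!: mult_nonneg_nonneg simp del: times_divide_eq_right\<close>)
  also have "\<dots> = ennreal (c0 * ?P) + ennreal (c0 * sqrt b) * ennreal \<bar>?I\<bar>"
    using ennreal_mult[of "c0 * sqrt b" "\<bar>?I\<bar>"] c0_pos b by simp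
  also have "\<dots> \<le> R s y"
    unfolding R_def by (intro add_left_mono mult_left_mono I) auto
  finally show ?thesis .
qed

definition A :: "real \<Rightarrow> ennreal" where
  "A s = ennreal (exp (- a * s)) + ennreal (sqrt b) *
     (\<integral>\<^sup>+ w. ennreal (sqrt w * exp (- a * w - beta * (s - w)) / sqrt (s - w)) * indicator {0<..<s} w \<partial>lborel)"

lemma R_meas[measurable]: "R s \<in> borel_measurable borel"
  unfolding R_def hK_def by measurable

lemma inner_gauss:
  assumes w: "0 < w" "w < s"
  shows "(\<integral>\<^sup>+ y. ennreal (hK s y w) \<partial>lborel)
     = ennreal (sqrt (pi * (4 * eps * w)) * (exp (- a * w - beta * (s - w)) / sqrt (s - w)))"
proof -
  let ?X = "exp (- a * w - beta * (s - w)) / sqrt (s - w)"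
  have X: "?X \<ge> 0" using w by simp
  have hKe: "hK s y w = exp (- (y ^ 2) / (4 * eps * w)) * ?X" for y
    unfolding hK_def by (simp add: exp_diff exp_add exp_minus field_simps)
  have "(\<integral>\<^sup>+ y. ennreal (hK s y w) \<partial>lborel) = (\<integral>\<^sup>+ y. ennreal (exp (- (y ^ 2) / (4 * eps * w))) * ennreal ?X \<partial>lborel)"
    by (intro nn_integral_cong, simp only: hKe, rule ennreal_mult) (use X in auto)
  also have "\<dots> = (\<integral>\<^sup>+ y. ennreal (exp (- (y ^ 2) / (4 * eps * w))) \<partial>lborel) * ennreal ?X"
    by (rule nn_integral_multc) simp
  also have "\<dots> = ennreal (sqrt (pi * (4 * eps * w))) * ennreal ?X"
    using eps w by (subst gauss_nn) auto
  also have "\<dots> = ennreal (sqrt (pi * (4 * eps * w)) * ?X)"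
    by (rule ennreal_mult[symmetric]) (use X eps w in auto)
  finally show ?thesis .
qed

lemma R_int:
  assumes s: "s > 0"
  shows "(\<integral>\<^sup>+ y. R s y \<partial>lborel) = A s"
proof -
  let ?P = "\<lambda>y. ennreal (c0 * (exp (- (y ^ 2) / (4 * eps * s) - a * s) / sqrt s))"
  let ?Q = "\<lambda>y. (\<integral>\<^sup>+ w. ennreal (hK s y w) * indicator {0..s} w \<partial>lborel)"
  have "(\<integral>\<^sup>+ y. R s y \<partial>lborel) = (\<integral>\<^sup>+ y. ?P y \<partial>lborel) + (\<integral>\<^sup>+ y. ennreal (c0 * sqrt b) * ?Q y \<partial>lborel)"
    unfolding R_def by (rule nn_integral_add) (unfold hK_def, measurable)
  also have "(\<integral>\<^sup>+ y. ?P y \<partial>lborel) = ennreal (exp (- a * s))"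
  proof -
    let ?k = "c0 * exp (- a * s) / sqrt s"
    have k: "?k \<ge> 0" using c0_pos s by simp
    have e1: "?k * sqrt (pi * (4 * eps * s)) = exp (- a * s)"
      unfolding c0_def using s eps by (simp add: real_sqrt_mult field_simps)
    have e2: "ennreal ?k * ennreal (sqrt (pi * (4 * eps * s))) = ennreal (?k * sqrt (pi * (4 * eps * s)))"
      by (rule ennreal_mult[symmetric]) (use k eps s in auto)
    have "?P y = ennreal ?k * ennreal (exp (- (y ^ 2) / (4 * eps * s)))" for y
      using k by (simp add: ennreal_mult[symmetric] exp_diff exp_minus field_simps)
    hence "(\<integral>\<^sup>+ y. ?P y \<partial>lborel) = ennreal ?k * (\<integral>\<^sup>+ y. ennreal (exp (- (y ^ 2) / (4 * eps * s))) \<partial>lborel)"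
      by (simp add: nn_integral_cmult)
    also have "\<dots> = ennreal ?k * ennreal (sqrt (pi * (4 * eps * s)))"
      using eps s by (subst gauss_nn) auto
    also have "\<dots> = ennreal (exp (- a * s))" using e1 e2 by simp
    finally show ?thesis .
  qed
  also have "(\<integral>\<^sup>+ y. ennreal (c0 * sqrt b) * ?Q y \<partial>lborel)
      = ennreal (c0 * sqrt b) * (\<integral>\<^sup>+ y. ?Q y \<partial>lborel)"
    by (rule nn_integral_cmult) (unfold hK_def, measurable)
  also have "(\<integral>\<^sup>+ y. ?Q y \<partial>lborel) = (\<integral>\<^sup>+ w. (\<integral>\<^sup>+ y. ennreal (hK s y w) * indicator {0..s} w \<partial>lborel) \<partial>lborel)"
    by (rule lborel_pair.Fubini') (unfold hK_def, measurable)
  also have "\<dots> = (\<integral>\<^sup>+ w. ennreal (sqrt (pi * (4 * eps * w)) * (exp (- a * w - beta * (s - w)) / sqrt (s - w))) * indicator {0<..<s} w \<partial>lborel)"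
  proof (rule nn_integral_cong_AE)
    have "AE w in lborel. w \<noteq> 0" by (rule AE_lborel_singleton)
    moreover have "AE w in lborel. w \<noteq> s" by (rule AE_lborel_singleton)
    ultimately show "AE w in lborel. (\<integral>\<^sup>+ y. ennreal (hK s y w) * indicator {0..s} w \<partial>lborel) =
        ennreal (sqrt (pi * (4 * eps * w)) * (exp (- a * w - beta * (s - w)) / sqrt (s - w))) * indicator {0<..<s} w"
    proof eventually_elim
      case (elim w)
      show ?case
      proof (cases "w \<in> {0<..<s}")
        case True
        hence "(\<integral>\<^sup>+ y. ennreal (hK s y w) * indicator {0..s} w \<partial>lborel) = (\<integral>\<^sup>+ y. ennreal (hK s y w) \<partial>lborel)"
          by simp
        also have "\<dots> = ennreal (sqrt (pi * (4 * eps * w)) * (exp (- a * w - beta * (s - w)) / sqrt (s - w)))"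
          using True by (intro inner_gauss) auto
        finally show ?thesis using True by simp
      next
        case False
        hence "w \<notin> {0..s}" using elim by auto
        thus ?thesis using False by simp
      qed
    qed
  qed
  also have "ennreal (c0 * sqrt b) * \<dots> = ennreal (sqrt b) *
     (\<integral>\<^sup>+ w. ennreal (sqrt w * exp (- a * w - beta * (s - w)) / sqrt (s - w)) * indicator {0<..<s} w \<partial>lborel)"
  proof -
    have "ennreal (c0 * sqrt b) * (\<integral>\<^sup>+ w. ennreal (sqrt (pi * (4 * eps * w)) * (exp (- a * w - beta * (s - w)) / sqrt (s - w))) * indicator {0<..<s} w \<partial>lborel)
       = (\<integral>\<^sup>+ w. ennreal (c0 * sqrt b) * (ennreal (sqrt (pi * (4 * eps * w)) * (exp (- a * w - beta * (s - w)) / sqrt (s - w))) * indicator {0<..<s} w) \<partial>lborel)"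
      by (rule nn_integral_cmult[symmetric]) measurable
    also have "\<dots> = (\<integral>\<^sup>+ w. ennreal (sqrt b) * (ennreal (sqrt w * exp (- a * w - beta * (s - w)) / sqrt (s - w)) * indicator {0<..<s} w) \<partial>lborel)"
    proof (rule nn_integral_cong)
      fix w
      show "ennreal (c0 * sqrt b) * (ennreal (sqrt (pi * (4 * eps * w)) * (exp (- a * w - beta * (s - w)) / sqrt (s - w))) * indicator {0<..<s} w)
         = ennreal (sqrt b) * (ennreal (sqrt w * exp (- a * w - beta * (s - w)) / sqrt (s - w)) * indicator {0<..<s} w)"
      proof (cases "w \<in> {0<..<s}")
        case True
        have e: "c0 * sqrt b * (sqrt (pi * (4 * eps * w)) * (exp (- a * w - beta * (s - w)) / sqrt (s - w)))
            = sqrt b * (sqrt w * exp (- a * w - beta * (s - w)) / sqrt (s - w))"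
          unfolding c0_def using eps True by (simp add: real_sqrt_mult field_simps)
        have "ennreal (c0 * sqrt b) * ennreal (sqrt (pi * (4 * eps * w)) * (exp (- a * w - beta * (s - w)) / sqrt (s - w)))
            = ennreal (sqrt b) * ennreal (sqrt w * exp (- a * w - beta * (s - w)) / sqrt (s - w))"
        proof -
          have "ennreal (c0 * sqrt b) * ennreal (sqrt (pi * (4 * eps * w)) * (exp (- a * w - beta * (s - w)) / sqrt (s - w)))
             = ennreal (c0 * sqrt b * (sqrt (pi * (4 * eps * w)) * (exp (- a * w - beta * (s - w)) / sqrt (s - w))))"
            by (rule ennreal_mult[symmetric]) (use True c0_pos b eps in auto)
          also have "\<dots> = ennreal (sqrt b * (sqrt w * exp (- a * w - beta * (s - w)) / sqrt (s - w)))" by (simp only: e)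
          also have "\<dots> = ennreal (sqrt b) * ennreal (sqrt w * exp (- a * w - beta * (s - w)) / sqrt (s - w))"
            by (rule ennreal_mult) (use True b in auto)
          finally show ?thesis .
        qed
        thus ?thesis using True by simp
      qed simp
    qed
    also have "\<dots> = ennreal (sqrt b) *
     (\<integral>\<^sup>+ w. ennreal (sqrt w * exp (- a * w - beta * (s - w)) / sqrt (s - w)) * indicator {0<..<s} w \<partial>lborel)"
      by (rule nn_integral_cmult) measurable
    finally show ?thesis .
  qed
  finally show ?thesis unfolding A_def .
qed

lemma pred_ival[measurable]: "Measurable.pred (borel \<Otimes>\<^sub>M borel) (\<lambda>x::real \<times> real. snd x \<in> {0<..<fst x})"
  unfolding greaterThanLessThan_iff by measurable

lemma A_meas[measurable]: "A \<in> borel_measurable borel"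
  unfolding A_def by measurable

lemma inv_sqrt_int:
  assumes s: "s > 0"
  shows "(\<integral>\<^sup>+ w. ennreal (1 / sqrt (s - w)) * indicator {0<..<s} w \<partial>lborel) = ennreal (2 * sqrt s)"
proof -
  have "(\<integral>\<^sup>+ w. ennreal (1 / sqrt (s - w)) * indicator {0<..<s} w \<partial>lborel)
      = (\<integral>\<^sup>+ w. ennreal (1 / sqrt (s - w)) * indicator {0..s} w \<partial>lborel)"
  proof (rule nn_integral_cong_AE)
    have "AE w in lborel. w \<noteq> 0" by (rule AE_lborel_singleton)
    moreover have "AE w in lborel. w \<noteq> s" by (rule AE_lborel_singleton)
    ultimately show "AE w in lborel. ennreal (1 / sqrt (s - w)) * indicator {0<..<s} w = ennreal (1 / sqrt (s - w)) * indicator {0..s} w"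
      by eventually_elim (auto simp: indicator_def)
  qed
  also have "\<dots> = (\<integral>\<^sup>+ y. ennreal (1 / sqrt y) * indicator {s - s..s} y \<partial>lborel)"
    by (rule affine_piece(1)[of "\<lambda>y. ennreal (1 / sqrt y)" s s]) measurable
  also have "\<dots> = (\<integral>\<^sup>+ y. ennreal (y powr (- 1 / 2)) * indicator {0..s} y \<partial>lborel)"
  proof (rule nn_integral_cong)
    fix y :: real
    show "ennreal (1 / sqrt y) * indicator {s - s..s} y = ennreal (y powr (- 1 / 2)) * indicator {0..s} y"
    proof (cases "y > 0")
      case True
      hence "y powr (- 1 / 2) = 1 / sqrt y"
        by (simp add: powr_minus_divide powr_half_sqrt[symmetric] less_imp_le)
      thus ?thesis by simp
    qed (auto simp: indicator_def)
  qed
  also have "\<dots> = ennreal (s powr (- 1 / 2 + 1) / (- 1 / 2 + 1))"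
    by (rule nn_integral_has_integral_lebesgue'[OF _ has_integral_powr_from_0]) (use s in auto)
  also have "s powr (- 1 / 2 + 1) / (- 1 / 2 + 1) = 2 * sqrt s"
    using s by (simp add: powr_half_sqrt)
  finally show ?thesis .
qed

lemma A_bound:
  assumes s: "s > 0"
  shows "A s \<le> ennreal ((1 + 2 * sqrt b * s) * exp (- min a beta * s))"
proof -
  let ?w = "min a beta"
  let ?W = "\<integral>\<^sup>+ w. ennreal (sqrt w * exp (- a * w - beta * (s - w)) / sqrt (s - w)) * indicator {0<..<s} w \<partial>lborel"
  have "?W \<le> (\<integral>\<^sup>+ w. ennreal (sqrt s * exp (- ?w * s)) * (ennreal (1 / sqrt (s - w)) * indicator {0<..<s} w) \<partial>lborel)"
  proof (rule nn_integral_mono)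
    fix w
    show "ennreal (sqrt w * exp (- a * w - beta * (s - w)) / sqrt (s - w)) * indicator {0<..<s} w
        \<le> ennreal (sqrt s * exp (- ?w * s)) * (ennreal (1 / sqrt (s - w)) * indicator {0<..<s} w)"
    proof (cases "w \<in> {0<..<s}")
      case True
      have e: "- a * w - beta * (s - w) \<le> - ?w * s"
      proof -
        have "?w * w \<le> a * w" "?w * (s - w) \<le> beta * (s - w)"
          using True by (auto intro!: mult_right_mono)
        thus ?thesis by (simp add: algebra_simps)
      qed
      have "sqrt w * exp (- a * w - beta * (s - w)) / sqrt (s - w) \<le> sqrt s * exp (- ?w * s) * (1 / sqrt (s - w))"
        using True e by (auto intro!: mult_mono divide_right_mono simp: divide_inverse)
      hence "ennreal (sqrt w * exp (- a * w - beta * (s - w)) / sqrt (s - w)) \<le> ennreal (sqrt s * exp (- ?w * s) * (1 / sqrt (s - w)))"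
        by (rule ennreal_leI)
      also have "\<dots> = ennreal (sqrt s * exp (- ?w * s)) * ennreal (1 / sqrt (s - w))"
        by (rule ennreal_mult) (use True s in auto)
      finally show ?thesis using True by simp
    qed simp
  qed
  also have "\<dots> = ennreal (sqrt s * exp (- ?w * s)) * (\<integral>\<^sup>+ w. ennreal (1 / sqrt (s - w)) * indicator {0<..<s} w \<partial>lborel)"
    by (rule nn_integral_cmult) measurable
  also have "\<dots> = ennreal (sqrt s * exp (- ?w * s)) * ennreal (2 * sqrt s)"
    using inv_sqrt_int[OF s] by simp
  also have "\<dots> = ennreal (2 * s * exp (- ?w * s))"
    using s by (simp add: ennreal_mult[symmetric] mult_ac)
  finally have W: "?W \<le> ennreal (2 * s * exp (- ?w * s))" .
  have "A s = ennreal (exp (- a * s)) + ennreal (sqrt b) * ?W" unfolding A_def ..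
  also have "\<dots> \<le> ennreal (exp (- ?w * s)) + ennreal (sqrt b) * ennreal (2 * s * exp (- ?w * s))"
    using s by (intro add_mono mult_left_mono W ennreal_leI) auto
  also have "\<dots> = ennreal ((1 + 2 * sqrt b * s) * exp (- min a beta * s))"
    using s b by (simp add: ennreal_mult[symmetric] ennreal_plus[symmetric] algebra_simps del: ennreal_plus)
  finally show ?thesis .
qed

lemma exp_int: "(\<integral>\<^sup>+ s. ennreal (exp (- a * s)) * indicator {0..} s \<partial>lborel) = ennreal (1 / a)"
proof -
  have "(\<integral>\<^sup>+ s. ennreal (exp (- a * s)) * indicator {0..} s \<partial>lborel)
      = (\<integral>\<^sup>+ x. ennreal (indicator {0..} x * x powr (1 - 1) * exp (- a * x)) \<partial>lborel)"
  proof (rule nn_integral_cong_AE)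
    have "AE x in lborel. x \<noteq> 0" by (rule AE_lborel_singleton)
    thus "AE x in lborel. ennreal (exp (- a * x)) * indicator {0..} x = ennreal (indicator {0..} x * x powr (1 - 1) * exp (- a * x))"
      by eventually_elim (auto simp: indicator_def)
  qed
  also have "\<dots> = ennreal (Gamma 1 / a powr 1)" by (rule gamma_scaled) (use a in auto)
  finally show ?thesis using a by simp
qed

lemma beta_int: "(\<integral>\<^sup>+ v. ennreal (exp (- beta * v) / sqrt v) * indicator {0<..} v \<partial>lborel) = ennreal (sqrt pi / sqrt beta)"
proof -
  have "(\<integral>\<^sup>+ v. ennreal (exp (- beta * v) / sqrt v) * indicator {0<..} v \<partial>lborel)
      = (\<integral>\<^sup>+ x. ennreal (indicator {0..} x * x powr (1/2 - 1) * exp (- beta * x)) \<partial>lborel)"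
  proof (rule nn_integral_cong)
    fix x :: real
    show "ennreal (exp (- beta * x) / sqrt x) * indicator {0<..} x = ennreal (indicator {0..} x * x powr (1/2 - 1) * exp (- beta * x))"
    proof (cases "x > 0")
      case True
      hence "x powr (1/2 - 1) = 1 / sqrt x"
        by (simp add: powr_minus_divide powr_half_sqrt[symmetric] less_imp_le)
      thus ?thesis using True by simp
    qed (auto simp: indicator_def)
  qed
  also have "\<dots> = ennreal (Gamma (1/2) / beta powr (1/2))" by (rule gamma_scaled) (use beta in auto)
  finally show ?thesis using beta by (simp add: Gamma_one_half_real powr_half_sqrt less_imp_le)
qed

lemma sqrt_int: "(\<integral>\<^sup>+ w. ennreal (sqrt w * exp (- a * w)) * indicator {0<..} w \<partial>lborel) = ennreal (sqrt pi / 2 / a powr (3/2))"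
proof -
  have "(\<integral>\<^sup>+ w. ennreal (sqrt w * exp (- a * w)) * indicator {0<..} w \<partial>lborel)
      = (\<integral>\<^sup>+ x. ennreal (indicator {0..} x * x powr (3/2 - 1) * exp (- a * x)) \<partial>lborel)"
  proof (rule nn_integral_cong)
    fix x :: real
    show "ennreal (sqrt x * exp (- a * x)) * indicator {0<..} x = ennreal (indicator {0..} x * x powr (3/2 - 1) * exp (- a * x))"
    proof (cases "x > 0")
      case True
      hence "x powr (3/2 - 1) = sqrt x"
        by (simp add: powr_half_sqrt less_imp_le)
      thus ?thesis using True by simp
    qed (auto simp: indicator_def)
  qed
  also have "\<dots> = ennreal (Gamma (3/2) / a powr (3/2))" by (rule gamma_scaled) (use a in auto)
  finally show ?thesis by (simp add: Gamma_three_halves)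
qed

definition B2 :: real where "B2 = 1 / a + sqrt b * pi / (2 * a powr (3/2) * sqrt beta)"

lemma A_int:
  shows "(\<integral>\<^sup>+ \<tau>. A (t - \<tau>) * indicator {0..t} \<tau> \<partial>lborel) \<le> ennreal B2"
proof -
  let ?F = "\<lambda>s w. ennreal (sqrt w * exp (- a * w - beta * (s - w)) / sqrt (s - w)) * indicator {0<..<s} w"
  have "(\<integral>\<^sup>+ \<tau>. A (t - \<tau>) * indicator {0..t} \<tau> \<partial>lborel) = (\<integral>\<^sup>+ s. A s * indicator {t - t..t} s \<partial>lborel)"
    by (rule affine_piece(1)) measurable
  also have "\<dots> \<le> (\<integral>\<^sup>+ s. ennreal (exp (- a * s)) * indicator {0..} s + ennreal (sqrt b) * (\<integral>\<^sup>+ w. ?F s w \<partial>lborel) \<partial>lborel)"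
  proof (rule nn_integral_mono)
    fix s
    show "A s * indicator {t - t..t} s \<le> ennreal (exp (- a * s)) * indicator {0..} s + ennreal (sqrt b) * (\<integral>\<^sup>+ w. ?F s w \<partial>lborel)"
      unfolding A_def by (cases "s \<in> {0..t}") (auto simp: indicator_def distrib_right)
  qed
  also have "\<dots> = (\<integral>\<^sup>+ s. ennreal (exp (- a * s)) * indicator {0..} s \<partial>lborel) + ennreal (sqrt b) * (\<integral>\<^sup>+ s. (\<integral>\<^sup>+ w. ?F s w \<partial>lborel) \<partial>lborel)"
    by (subst nn_integral_add) (measurable, simp add: nn_integral_cmult)
  also have "(\<integral>\<^sup>+ s. (\<integral>\<^sup>+ w. ?F s w \<partial>lborel) \<partial>lborel) = (\<integral>\<^sup>+ w. (\<integral>\<^sup>+ s. ?F s w \<partial>lborel) \<partial>lborel)"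
    by (rule lborel_pair.Fubini'[symmetric]) measurable
  also have "\<dots> = (\<integral>\<^sup>+ w. ennreal (sqrt pi / sqrt beta) * (ennreal (sqrt w * exp (- a * w)) * indicator {0<..} w) \<partial>lborel)"
  proof (rule nn_integral_cong)
    fix w :: real
    show "(\<integral>\<^sup>+ s. ?F s w \<partial>lborel) = ennreal (sqrt pi / sqrt beta) * (ennreal (sqrt w * exp (- a * w)) * indicator {0<..} w)"
    proof (cases "w > 0")
      case False thus ?thesis by (simp add: indicator_def)
    next
      case True
      have "(\<integral>\<^sup>+ s. ?F s w \<partial>lborel) = (\<integral>\<^sup>+ s. ennreal (sqrt w * exp (- a * w)) * (ennreal (exp (- beta * (s - w)) / sqrt (s - w)) * indicator {0<..} (s - w)) \<partial>lborel)"
      proof (rule nn_integral_cong)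
        fix s :: real
        show "?F s w = ennreal (sqrt w * exp (- a * w)) * (ennreal (exp (- beta * (s - w)) / sqrt (s - w)) * indicator {0<..} (s - w))"
        proof (cases "w < s")
          case True
          have "ennreal (sqrt w * exp (- a * w - beta * (s - w)) / sqrt (s - w)) = ennreal (sqrt w * exp (- a * w) * (exp (- beta * (s - w)) / sqrt (s - w)))"
            by (simp add: exp_diff exp_minus exp_add field_simps)
          also have "\<dots> = ennreal (sqrt w * exp (- a * w)) * ennreal (exp (- beta * (s - w)) / sqrt (s - w))"
            by (rule ennreal_mult) (use True \<open>w > 0\<close> in auto)
          finally show ?thesis using True \<open>w > 0\<close> by (simp add: indicator_def)
        qed (use \<open>w > 0\<close> in \<open>simp add: indicator_def\<close>)
      qed
      also have "\<dots> = ennreal (sqrt w * exp (- a * w)) * (\<integral>\<^sup>+ s. ennreal (exp (- beta * (s - w)) / sqrt (s - w)) * indicator {0<..} (s - w) \<partial>lborel)"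
        by (rule nn_integral_cmult) measurable
      also have "(\<integral>\<^sup>+ s. ennreal (exp (- beta * (s - w)) / sqrt (s - w)) * indicator {0<..} (s - w) \<partial>lborel)
          = (\<integral>\<^sup>+ v. ennreal (exp (- beta * v) / sqrt v) * indicator {0<..} v \<partial>lborel)"
      proof -
        have "(\<integral>\<^sup>+ v. ennreal (exp (- beta * v) / sqrt v) * indicator {0<..} v \<partial>lborel)
            = ennreal \<bar>1\<bar> * (\<integral>\<^sup>+ s. ennreal (exp (- beta * ((- w) + 1 * s)) / sqrt ((- w) + 1 * s)) * indicator {0<..} ((- w) + 1 * s) \<partial>lborel)"
          by (rule nn_integral_real_affine) auto
        thus ?thesis by simp
      qed
      finally show ?thesis using True unfolding beta_int by (simp add: mult_ac)
    qed
  qed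
  also have "\<dots> = ennreal (sqrt pi / sqrt beta) * ennreal (sqrt pi / 2 / a powr (3/2))"
    by (subst nn_integral_cmult) (measurable, simp only: sqrt_int)
  finally have "(\<integral>\<^sup>+ \<tau>. A (t - \<tau>) * indicator {0..t} \<tau> \<partial>lborel)
     \<le> ennreal (1 / a) + ennreal (sqrt b) * (ennreal (sqrt pi / sqrt beta) * ennreal (sqrt pi / 2 / a powr (3/2)))"
    unfolding exp_int[symmetric] .
  also have "\<dots> = ennreal B2"
  proof -
    have "sqrt b * (sqrt pi / sqrt beta * (sqrt pi / 2 / a powr (3/2))) = sqrt b * pi / (2 * a powr (3/2) * sqrt beta)"
      by (simp add: field_simps)
    thus ?thesis unfolding B2_def using a b beta
      by (simp add: ennreal_mult[symmetric] ennreal_plus[symmetric] del: ennreal_plus)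
  qed
  finally show ?thesis .
qed

lemma R_even: "R s (- y) = R s y"
  unfolding R_def hK_def by simp

lemma theta_bound:
  assumes s: "s > 0"
  shows "ennreal \<bar>theta0 a b eps beta L z s\<bar> \<le> Th L (R s) z"
proof -
  have "ennreal \<bar>theta0 a b eps beta L z s\<bar> \<le> (\<integral>\<^sup>+ n. ennreal \<bar>K0 a b eps beta (z + 2 * of_int n * L) s\<bar> \<partial>count_space (UNIV :: int set))"
    unfolding theta0_def by (rule infsum_le_nn_count)
  also have "\<dots> \<le> Th L (R s) z"
    unfolding Th_def by (intro nn_integral_mono K0_bound s)
  finally show ?thesis .
qed

lemma xi_bound:
  fixes \<phi> :: "real \<Rightarrow> real"
  assumes s: "s > 0" and x: "x \<in> {0..L}" and M: "M \<ge> 0" and phi: "\<And>\<xi>. \<xi> \<in> {0..L} \<Longrightarrow> \<bar>\<phi> \<xi>\<bar> \<le> M"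
  shows "ennreal \<bar>integral {0..L} (\<lambda>\<xi>. (theta0 a b eps beta L \<bar>x - \<xi>\<bar> s + theta0 a b eps beta L (x + \<xi>) s) * \<phi> \<xi>)\<bar>
     \<le> ennreal M * A s"
proof -
  let ?H = "\<lambda>\<xi>. ennreal M * (Th L (R s) \<bar>x - \<xi>\<bar> + Th L (R s) (x + \<xi>))"
  have Hm: "?H \<in> borel_measurable borel"
  proof -
    have [measurable]: "Th L (R s) \<in> borel_measurable borel" by (rule Th_meas) (rule R_meas)
    show ?thesis by measurable
  qed
  have "ennreal \<bar>integral {0..L} (\<lambda>\<xi>. (theta0 a b eps beta L \<bar>x - \<xi>\<bar> s + theta0 a b eps beta L (x + \<xi>) s) * \<phi> \<xi>)\<bar>
      \<le> (\<integral>\<^sup>+ \<xi>. ?H \<xi> * indicator {0..L} \<xi> \<partial>lborel)"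
  proof (rule HK_bound[OF _ Hm])
    show "AE \<xi> in lborel. \<xi> \<in> {0..L} \<longrightarrow> ennreal \<bar>(theta0 a b eps beta L \<bar>x - \<xi>\<bar> s + theta0 a b eps beta L (x + \<xi>) s) * \<phi> \<xi>\<bar> \<le> ?H \<xi>"
    proof (intro AE_I2 impI)
      fix \<xi> assume \<xi>: "\<xi> \<in> {0..L}"
      let ?t1 = "theta0 a b eps beta L \<bar>x - \<xi>\<bar> s" and ?t2 = "theta0 a b eps beta L (x + \<xi>) s"
      have "\<bar>(?t1 + ?t2) * \<phi> \<xi>\<bar> \<le> M * (\<bar>?t1\<bar> + \<bar>?t2\<bar>)"
      proof -
        have "\<bar>(?t1 + ?t2) * \<phi> \<xi>\<bar> = \<bar>?t1 + ?t2\<bar> * \<bar>\<phi> \<xi>\<bar>" by (rule abs_mult)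
        also have "\<dots> \<le> (\<bar>?t1\<bar> + \<bar>?t2\<bar>) * M"
          by (intro mult_mono abs_triangle_ineq phi \<xi>) auto
        finally show ?thesis by (simp add: mult.commute)
      qed
      hence "ennreal \<bar>(?t1 + ?t2) * \<phi> \<xi>\<bar> \<le> ennreal (M * (\<bar>?t1\<bar> + \<bar>?t2\<bar>))" by (rule ennreal_leI)
      also have "\<dots> = ennreal M * (ennreal \<bar>?t1\<bar> + ennreal \<bar>?t2\<bar>)"
        using M by (simp add: ennreal_mult ennreal_plus)
      also have "\<dots> \<le> ?H \<xi>"
        by (intro mult_left_mono add_mono theta_bound s) auto
      finally show "ennreal \<bar>(?t1 + ?t2) * \<phi> \<xi>\<bar> \<le> ?H \<xi>" .
    qed
  qed simp
  also have "\<dots> = ennreal M * (\<integral>\<^sup>+ \<xi>. (Th L (R s) \<bar>x - \<xi>\<bar> + Th L (R s) (x + \<xi>)) * indicator {0..L} \<xi> \<partial>lborel)"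
  proof -
    have [measurable]: "Th L (R s) \<in> borel_measurable borel" by (rule Th_meas) (rule R_meas)
    show ?thesis by (subst nn_integral_cmult[symmetric]) (measurable, simp add: mult.assoc)
  qed
  also have "\<dots> \<le> ennreal M * (\<integral>\<^sup>+ y. R s y \<partial>lborel)"
    by (intro mult_left_mono tile L R_meas R_even) auto
  also have "\<dots> = ennreal M * A s" using R_int[OF s] by simp
  finally show ?thesis .
qed

end

lemma enn_le_real: "ennreal x \<le> ennreal y \<Longrightarrow> 0 \<le> y \<Longrightarrow> x \<le> y"
  by (simp add: ennreal_le_iff)

lemma lin3: "(X::real) \<le> Y \<Longrightarrow> 0 \<le> Y \<Longrightarrow> 0 < Z \<Longrightarrow> Z + X \<le> 2 * (Z + Y)" by (simp add: algebra_simps)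

context setting begin

lemma main_bound:
  fixes f :: "real \<Rightarrow> real \<Rightarrow> real" and u0 :: "real \<Rightarrow> real"
  assumes T: "T > 0"
    and fb: "bounded ((\<lambda>(x, t). f x t) ` ({0..L} \<times> {0<..T}))"
    and u0c: "continuous_on {0..L} u0"
    and x: "x \<in> {0..L}" and t: "0 < t" "t \<le> T"
  shows "\<bar>u_sol a b eps beta L f u0 x t\<bar>
      \<le> 2 * (normf L T f * (1 / a + pi * sqrt b * (a + beta) / (2 * (a * beta) powr (3/2)))
             + norm0 L u0 * (1 + sqrt b * pi * t) * exp (- min a beta * t))"
proof -
  define M0 where "M0 = norm0 L u0"
  define M where "M = normf L T f"
  have bdd0: "bdd_above ((\<lambda>x. \<bar>u0 x\<bar>) ` {0..L})"
    by (rule bounded_imp_bdd_above, rule compact_imp_bounded, rule compact_continuous_image)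
       (auto intro: continuous_intros u0c)
  have u0b: "\<bar>u0 \<xi>\<bar> \<le> M0" if "\<xi> \<in> {0..L}" for \<xi>
    unfolding M0_def norm0_def by (rule cSup_upper) (use that bdd0 in auto)
  have "\<bar>u0 0\<bar> \<le> M0" by (rule u0b) (use L in simp)
  hence M0: "M0 \<ge> 0" by (rule order_trans[OF abs_ge_zero])
  obtain B where B: "\<And>z. z \<in> (\<lambda>(x, t). f x t) ` ({0..L} \<times> {0<..T}) \<Longrightarrow> norm z \<le> B"
    using fb unfolding bounded_iff by blast
  have bddf: "bdd_above ((\<lambda>(x, t). \<bar>f x t\<bar>) ` ({0..L} \<times> {0<..T}))"
  proof (rule bdd_aboveI2)
    fix p assume p: "p \<in> {0..L} \<times> {0<..T}"
    have "norm ((\<lambda>(x, t). f x t) p) \<le> B" by (rule B) (use p in blast)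
    thus "(\<lambda>(x, t). \<bar>f x t\<bar>) p \<le> B" by (cases p) simp
  qed
  have fbd: "\<bar>f \<xi> \<tau>\<bar> \<le> M" if "\<xi> \<in> {0..L}" "\<tau> \<in> {0<..T}" for \<xi> \<tau>
  proof -
    have "(\<lambda>(x, t). \<bar>f x t\<bar>) (\<xi>, \<tau>) \<le> M"
      unfolding M_def normf_def by (rule cSup_upper) (use that bddf in auto)
    thus ?thesis by simp
  qed
  have "\<bar>f 0 T\<bar> \<le> M" by (rule fbd) (use L T in auto)
  hence M: "M \<ge> 0" by (rule order_trans[OF abs_ge_zero])
  let ?I1 = "integral {0..L} (\<lambda>\<xi>. (theta0 a b eps beta L \<bar>x - \<xi>\<bar> t + theta0 a b eps beta L (x + \<xi>) t) * u0 \<xi>)"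
  let ?inner = "\<lambda>\<tau>. integral {0..L} (\<lambda>\<xi>. (theta0 a b eps beta L \<bar>x - \<xi>\<bar> (t - \<tau>) + theta0 a b eps beta L (x + \<xi>) (t - \<tau>)) * f \<xi> \<tau>)"
  let ?I2 = "integral {0..t} ?inner"
  let ?w = "min a beta"
  have "ennreal \<bar>?I1\<bar> \<le> ennreal M0 * A t"
    by (rule xi_bound[OF t(1) x M0 u0b])
  also have "\<dots> \<le> ennreal M0 * ennreal ((1 + 2 * sqrt b * t) * exp (- ?w * t))"
    by (intro mult_left_mono A_bound t) auto
  also have "\<dots> = ennreal (M0 * ((1 + 2 * sqrt b * t) * exp (- ?w * t)))"
    using M0 t b by (simp add: ennreal_mult)
  finally have I1: "\<bar>?I1\<bar> \<le> M0 * ((1 + 2 * sqrt b * t) * exp (- ?w * t))"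
    by (rule enn_le_real) (use M0 t b in simp)
  have "ennreal \<bar>?I2\<bar> \<le> (\<integral>\<^sup>+ \<tau>. ennreal M * A (t - \<tau>) * indicator {0..t} \<tau> \<partial>lborel)"
  proof (rule HK_bound)
    have "AE \<tau> in lborel. \<tau> \<noteq> 0" by (rule AE_lborel_singleton)
    moreover have "AE \<tau> in lborel. \<tau> \<noteq> t" by (rule AE_lborel_singleton)
    ultimately show "AE \<tau> in lborel. \<tau> \<in> {0..t} \<longrightarrow> ennreal \<bar>?inner \<tau>\<bar> \<le> ennreal M * A (t - \<tau>)"
    proof eventually_elim
      case (elim \<tau>)
      show ?case
      proof
        assume "\<tau> \<in> {0..t}"
        hence \<tau>: "0 < \<tau>" "\<tau> < t" using elim by auto
        have st: "t - \<tau> > 0" using \<tau> by simp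
        have fb2: "\<bar>f \<xi> \<tau>\<bar> \<le> M" if "\<xi> \<in> {0..L}" for \<xi>
          by (rule fbd) (use that \<tau> t in auto)
        show "ennreal \<bar>?inner \<tau>\<bar> \<le> ennreal M * A (t - \<tau>)"
          by (rule xi_bound[where \<phi>="\<lambda>\<xi>. f \<xi> \<tau>", OF st x M fb2])
      qed
    qed
  qed measurable
  also have "\<dots> = ennreal M * (\<integral>\<^sup>+ \<tau>. A (t - \<tau>) * indicator {0..t} \<tau> \<partial>lborel)"
    by (subst nn_integral_cmult[symmetric]) (measurable, simp add: mult.assoc)
  also have "\<dots> \<le> ennreal M * ennreal B2"
    by (intro mult_left_mono A_int) auto
  also have "\<dots> = ennreal (M * B2)"
  proof -
    have "B2 \<ge> 0" unfolding B2_def using a b beta by simp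
    thus ?thesis by (intro ennreal_mult[symmetric] M)
  qed
  finally have I2: "\<bar>?I2\<bar> \<le> M * B2"
    by (rule enn_le_real) (use M a b beta in \<open>simp add: B2_def\<close>)
  have B2le: "B2 \<le> 2 * (1 / a + pi * sqrt b * (a + beta) / (2 * (a * beta) powr (3/2)))"
  proof -
    have ab: "(a * beta) powr (3/2) = a powr (3/2) * (beta * sqrt beta)"
    proof -
      have "beta powr (3/2) = beta powr (1 + 1/2)" by simp
      also have "\<dots> = beta powr 1 * beta powr (1/2)" by (rule powr_add)
      also have "\<dots> = beta * sqrt beta" using beta by (simp add: powr_half_sqrt less_imp_le)
      finally show ?thesis using a beta by (simp add: powr_mult less_imp_le)
    qed
    have ap: "a powr (3/2) > 0" using a by simp
    define K where "K = sqrt b * pi / (2 * a powr (3/2) * sqrt beta)"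
    have K: "K \<ge> 0" unfolding K_def using ap b beta by simp
    have eqK: "pi * sqrt b * (a + beta) / (2 * (a * beta) powr (3/2)) = K * ((a + beta) / beta)"
      unfolding ab K_def using ap beta by (simp add: divide_simps)
    have "1 \<le> (a + beta) / beta" using a beta by simp
    hence "K * 1 \<le> K * ((a + beta) / beta)" by (rule mult_left_mono[OF _ K])
    hence "sqrt b * pi / (2 * a powr (3/2) * sqrt beta) \<le> pi * sqrt b * (a + beta) / (2 * (a * beta) powr (3/2))"
      unfolding eqK by (simp add: K_def)
    moreover have "0 \<le> pi * sqrt b * (a + beta) / (2 * (a * beta) powr (3/2))" using a b beta by simp
    moreover have "0 < 1 / a" using a by simp
    ultimately show ?thesis unfolding B2_def by (rule lin3)
  qed
  have "\<bar>u_sol a b eps beta L f u0 x t\<bar> \<le> \<bar>?I1\<bar> + \<bar>?I2\<bar>"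
    unfolding u_sol_def by (rule abs_triangle_ineq)
  also have "\<dots> \<le> M0 * ((1 + 2 * sqrt b * t) * exp (- ?w * t)) + M * B2" using I1 I2 by (rule add_mono)
  also have "\<dots> \<le> M0 * (2 * (1 + sqrt b * pi * t) * exp (- ?w * t)) + M * (2 * (1 / a + pi * sqrt b * (a + beta) / (2 * (a * beta) powr (3/2))))"
  proof (intro add_mono mult_left_mono M0 M B2le)
    have "sqrt b * t * 1 \<le> sqrt b * t * pi"
      by (rule mult_left_mono) (use b t pi_gt3 in auto)
    hence "1 + 2 * sqrt b * t \<le> 2 * (1 + sqrt b * pi * t)"
      by (simp add: algebra_simps)
    thus "(1 + 2 * sqrt b * t) * exp (- ?w * t) \<le> 2 * (1 + sqrt b * pi * t) * exp (- ?w * t)"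
      by (rule mult_right_mono) simp
  qed
  also have "\<dots> = 2 * (normf L T f * (1 / a + pi * sqrt b * (a + beta) / (2 * (a * beta) powr (3/2)))
             + norm0 L u0 * (1 + sqrt b * pi * t) * exp (- min a beta * t))"
    unfolding M_def M0_def by (simp add: algebra_simps)
  finally show ?thesis .
qed

end

theorem theorem3p4:
  fixes a b eps beta L :: real
  assumes "a > 0" and "b > 0" and "eps > 0" and "beta > 0" and "L > 0"
  shows "\<exists>t0. \<forall>T (f :: real \<Rightarrow> real \<Rightarrow> real) (u0 :: real \<Rightarrow> real).
           T > 0 \<longrightarrow>
           continuous_on ({0..L} \<times> {0<..T}) (\<lambda>(x, t). f x t) \<longrightarrow>
           bounded ((\<lambda>(x, t). f x t) ` ({0..L} \<times> {0<..T})) \<longrightarrow>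
           continuous_on {0..L} u0 \<longrightarrow>
           (\<forall>x t. x \<in> {0..L} \<and> 0 < t \<and> t0 \<le> t \<and> t \<le> T \<longrightarrow>
              \<bar>u_sol a b eps beta L f u0 x t\<bar>
              \<le> 2 * (normf L T f * (1 / a + pi * sqrt b * (a + beta) / (2 * (a * beta) powr (3/2)))
                     + norm0 L u0 * (1 + sqrt b * pi * t) * exp (- min a beta * t)))"
proof -
  interpret setting a b eps beta L using assms by unfold_locales
  show ?thesis
  proof (intro exI[of _ 0] allI impI)
    fix T :: real and f :: "real \<Rightarrow> real \<Rightarrow> real" and u0 :: "real \<Rightarrow> real" and x t :: real
    assume T: "T > 0"
      and "continuous_on ({0..L} \<times> {0<..T}) (\<lambda>(x, t). f x t)"
      and fb: "bounded ((\<lambda>(x, t). f x t) ` ({0..L} \<times> {0<..T}))"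
      and u0c: "continuous_on {0..L} u0"
      and xt: "x \<in> {0..L} \<and> 0 < t \<and> 0 \<le> t \<and> t \<le> T"
    show "\<bar>u_sol a b eps beta L f u0 x t\<bar>
              \<le> 2 * (normf L T f * (1 / a + pi * sqrt b * (a + beta) / (2 * (a * beta) powr (3/2)))
                     + norm0 L u0 * (1 + sqrt b * pi * t) * exp (- min a beta * t))"
      by (rule main_bound[OF T fb u0c]) (use xt in auto)
  qed
qed

end
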